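(* Consider the parking problem on the infinite square grid in the model described in the context. Suppose the initial configuration $C(0)$ belongs to the class $\mathcal I_{223}$, i.e.: the set of parking nodes (with their capacities) is symmetric with respect to a unique line of symmetry $l$, the configuration $C(0)$ itself is symmetric with respect to $l$, no robot lies on a node of $l$, and at least one parking node lies on $l$. If the capacity of a parking node lying on $l$ is an odd integer, then the parking problem is unsolvable from $C(0)$.
   Context: The deployment region is the infinite square grid $G=P\times P$, where $P$ is the infinite path on $\mathbb Z$, embedded in the plane. A finite set $\mathcal P=\{p_1,\dots,p_m\}$ of distinct grid nodes are parking nodes; each $p_i$ has a capacity $k_i\ge 1$ known to all robots (maximum number of robots it may accommodate). There are $n=\sum_i k_i$ robots initially at pairwise distinct nodes. Robots are anonymous, autonomous, identical, homogeneous (same deterministic algorithm), oblivious, silent, disoriented (no common coordinate axes, no common chirality), have global visibility and global-strong multiplicity detection (they see the exact number of robots at every node). They act in Look-Compute-Move cycles under a fair asynchronous scheduler; a move goes to one of the four neighbours (or stays) and is instantaneous. The configuration $C(t)$ is given by $\lambda(v)$, the number of robots at node $v$ at time $t$, and $\mu(v)$, the capacity of $v$ if $v$ is a parking node and $0$ otherwise. A grid automorphism $\phi$ is a symmetry of the configuration if $\lambda(\phi(v))=\lambda(v)$ and $\mu(\phi(v))=\mu(v)$ for all $v$, and a symmetry of the parking nodes if $\mu(\phi(v))=\mu(v)$ for all $v$ (so symmetric parking nodes have equal capacities). Symmetries are reflections (about horizontal, vertical or diagonal axes through nodes or edge midpoints) and rotations (by $90^\circ$ or $180^\circ$). The parking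 problem: reach in finite time a configuration where every $p_i$ holds exactly $k_i$ robots, all robots are stationary, and any robot performing a Look decides not to move. It is unsolvable from $C(0)$ if no deterministic distributed algorithm guarantees this from $C(0)$ under all admissible schedules. *)

theory Defs
  imports Main
begin

type_synonym node = "int \<times> int"

definition vadd :: "node \<Rightarrow> node \<Rightarrow> node" where
  "vadd p q = (fst p + fst q, snd p + snd q)"

text \<open>A local coordinate frame of a disoriented robot: one of the 8 grid isometries
  fixing the origin (optional swap of axes, optional sign flips). Frames may differ
  between robots (no common axes, no common chirality).\<close>
type_synonym frame = "bool \<times> bool \<times> bool"

definition frame_apply :: "frame \<Rightarrow> node \<Rightarrow> node" where
  "frame_apply f v =
     (let (sw, sx, sy) = f;
          (a, b) = (if sw then (snd v, fst v) else (fst v, snd v))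
      in (if sx then - a else a, if sy then - b else b))"

definition cnt :: "nat \<Rightarrow> (nat \<Rightarrow> node) \<Rightarrow> node \<Rightarrow> nat" where
  "cnt n pos v = card {r. r < n \<and> pos r = v}"

text \<open>A snapshot as seen by a robot: robot counts and capacities, in the robot's
  local frame with the robot at the origin.\<close>
type_synonym view = "(node \<Rightarrow> nat) \<times> (node \<Rightarrow> nat)"

definition view_of :: "(node \<Rightarrow> nat) \<Rightarrow> nat \<Rightarrow> (nat \<Rightarrow> node) \<Rightarrow> frame \<Rightarrow> node \<Rightarrow> view" where
  "view_of \<mu> n pos f p =
     ((\<lambda>v. cnt n pos (vadd p (frame_apply f v))), (\<lambda>v. \<mu> (vadd p (frame_apply f v))))"

text \<open>A deterministic algorithm (anonymous, oblivious, identical robots) maps a view to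
  a move in local coordinates: stay or one of the four neighbours.\<close>
type_synonym algo = "view \<Rightarrow> node"

definition valid_alg :: "algo \<Rightarrow> bool" where
  "valid_alg A \<longleftrightarrow> (\<forall>x. A x \<in> {(0,0), (1,0), (-1,0), (0,1), (0,-1)})"

text \<open>Execution state: positions and, for each robot, the pending global move
  (Some d after a Look whose Move has not happened yet; None if idle).\<close>
type_synonym state = "(nat \<Rightarrow> node) \<times> (nat \<Rightarrow> node option)"

definition step :: "algo \<Rightarrow> (node \<Rightarrow> nat) \<Rightarrow> nat \<Rightarrow> (nat \<Rightarrow> frame) \<Rightarrow> nat \<Rightarrow> state \<Rightarrow> state" where
  "step A \<mu> n fr r s =
     (let (pos, pend) = s in
      case pend r of
        None \<Rightarrow> (pos, pend(r := Some (frame_apply (fr r) (A (view_of \<mu> n pos (fr r) (pos r))))))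
      | Some d \<Rightarrow> (pos(r := vadd (pos r) d), pend(r := None)))"

text \<open>Asynchronous execution: at each event, the scheduled robot either performs
  Look+Compute (if idle) or its Move (if a move is pending).\<close>
primrec exec :: "algo \<Rightarrow> (node \<Rightarrow> nat) \<Rightarrow> nat \<Rightarrow> (nat \<Rightarrow> frame) \<Rightarrow> (nat \<Rightarrow> node)
                 \<Rightarrow> (nat \<Rightarrow> nat) \<Rightarrow> nat \<Rightarrow> state" where
  "exec A \<mu> n fr pos0 sch 0 = (pos0, (\<lambda>r. None))"
| "exec A \<mu> n fr pos0 sch (Suc t) = step A \<mu> n fr (sch t) (exec A \<mu> n fr pos0 sch t)"

definition fair :: "nat \<Rightarrow> (nat \<Rightarrow> nat) \<Rightarrow> bool" where
  "fair n sch \<longleftrightarrow> (\<forall>t. sch t < n) \<and> (\<forall>r<n. \<forall>t. \<exists>t'\<ge>t. sch t' = r)"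

definition terminal :: "algo \<Rightarrow> (node \<Rightarrow> nat) \<Rightarrow> nat \<Rightarrow> (nat \<Rightarrow> frame) \<Rightarrow> state \<Rightarrow> bool" where
  "terminal A \<mu> n fr s =
     (let (pos, pend) = s in
        (\<forall>v. cnt n pos v = \<mu> v) \<and>
        (\<forall>r<n. pend r = None \<or> pend r = Some (0,0)) \<and>
        (\<forall>r<n. A (view_of \<mu> n pos (fr r) (pos r)) = (0,0)))"

definition solvable :: "(node \<Rightarrow> nat) \<Rightarrow> nat \<Rightarrow> (nat \<Rightarrow> node) \<Rightarrow> bool" where
  "solvable \<mu> n pos0 \<longleftrightarrow>
     (\<exists>A. valid_alg A \<and>
        (\<forall>fr sch. fair n sch \<longrightarrow> (\<exists>t. terminal A \<mu> n fr (exec A \<mu> n fr pos0 sch t))))"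

text \<open>Reflections of the grid that are grid automorphisms: about vertical, horizontal
  axes (through nodes or edge midpoints) and diagonal axes.\<close>
definition grid_reflections :: "(node \<Rightarrow> node) set" where
  "grid_reflections =
     {\<phi>. \<exists>a::int. \<phi> = (\<lambda>(x,y). (a - x, y)) \<or> \<phi> = (\<lambda>(x,y). (x, a - y))
               \<or> \<phi> = (\<lambda>(x,y). (y + a, x - a)) \<or> \<phi> = (\<lambda>(x,y). (a - y, a - x))}"

end

theory Submission
  imports Defs
begin

definition dlt :: "algo \<Rightarrow> (node \<Rightarrow> nat) \<Rightarrow> nat \<Rightarrow> (nat \<Rightarrow> frame) \<Rightarrow> (nat \<Rightarrow> node) \<Rightarrow> nat \<Rightarrow> node" where
  "dlt A \<mu> n fr P r = frame_apply (fr r) (A (view_of \<mu> n P (fr r) (P r)))"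

primrec rnd :: "algo \<Rightarrow> (node \<Rightarrow> nat) \<Rightarrow> nat \<Rightarrow> (nat \<Rightarrow> frame) \<Rightarrow> (nat \<Rightarrow> node) \<Rightarrow> nat \<Rightarrow> nat \<Rightarrow> node" where
  "rnd A \<mu> n fr p0 0 = p0"
| "rnd A \<mu> n fr p0 (Suc m) = (\<lambda>r. if r < n then vadd (rnd A \<mu> n fr p0 m r) (dlt A \<mu> n fr (rnd A \<mu> n fr p0 m) r) else rnd A \<mu> n fr p0 m r)"

definition schd :: "nat \<Rightarrow> nat \<Rightarrow> nat" where "schd n t = t mod n"

lemma look_phase:
  assumes "exec A \<mu> n fr p0 (schd n) (2*n*m) = (rnd A \<mu> n fr p0 m, \<lambda>_. None)" "k \<le> n"
  shows "exec A \<mu> n fr p0 (schd n) (2*n*m + k) = (rnd A \<mu> n fr p0 m, \<lambda>r. if r < k then Some (dlt A \<mu> n fr (rnd A \<mu> n fr p0 m) r) else None)"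
  using assms(2)
proof (induction k)
  case 0 thus ?case using assms(1) by simp
next
  case (Suc k)
  have e: "2*n*m + k = k + (2*m)*n" by (simp add: algebra_simps)
  have s: "schd n (2*n*m + k) = k" using Suc.prems unfolding schd_def e by simp
  show ?case using Suc by (simp add: s step_def dlt_def fun_eq_iff)
qed

lemma move_phase:
  assumes "exec A \<mu> n fr p0 (schd n) (2*n*m + n) = (rnd A \<mu> n fr p0 m, \<lambda>r. if r < n then Some (dlt A \<mu> n fr (rnd A \<mu> n fr p0 m) r) else None)" "j \<le> n"
  shows "exec A \<mu> n fr p0 (schd n) (2*n*m + n + j) = (\<lambda>r. if r < j then rnd A \<mu> n fr p0 (Suc m) r else rnd A \<mu> n fr p0 m r,
           \<lambda>r. if j \<le> r \<and> r < n then Some (dlt A \<mu> n fr (rnd A \<mu> n fr p0 m) r) else None)"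
  using assms(2)
proof (induction j)
  case 0 thus ?case using assms(1) by simp
next
  case (Suc j)
  have e: "2*n*m + n + j = j + (2*m+1)*n" by (simp add: algebra_simps)
  have s: "schd n (2*n*m + n + j) = j" using Suc.prems unfolding schd_def e by (simp only: mod_mult_self1) simp
  show ?case using Suc by (auto simp add: s step_def fun_eq_iff)
qed

lemma round_start:
  assumes "0 < n"
  shows "exec A \<mu> n fr p0 (schd n) (2*n*m) = (rnd A \<mu> n fr p0 m, \<lambda>_. None)"
proof (induction m)
  case 0 thus ?case by simp
next
  case (Suc m)
  have a: "exec A \<mu> n fr p0 (schd n) (2*n*m + n) = (rnd A \<mu> n fr p0 m, \<lambda>r. if r < n then Some (dlt A \<mu> n fr (rnd A \<mu> n fr p0 m) r) else None)"
    using look_phase[OF Suc] by simp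
  have "exec A \<mu> n fr p0 (schd n) (2*n*m + n + n) = (\<lambda>r. if r < n then rnd A \<mu> n fr p0 (Suc m) r else rnd A \<mu> n fr p0 m r,
           \<lambda>r. if n \<le> r \<and> r < n then Some (dlt A \<mu> n fr (rnd A \<mu> n fr p0 m) r) else None)"
    using move_phase[OF a, of n] by simp
  moreover have "2*n*Suc m = 2*n*m + n + n" by simp
  ultimately show ?case by (auto simp: fun_eq_iff)
qed

lemma refl_props:
  assumes "\<phi> \<in> grid_reflections"
  shows "\<exists>Lf. (\<forall>p w. \<phi> (vadd p w) = vadd (\<phi> p) (frame_apply Lf w)) \<and> (\<forall>v. frame_apply Lf (frame_apply Lf v) = v) \<and> (\<forall>x. \<phi> (\<phi> x) = x)"
proof -
  obtain a :: int where "\<phi> = (\<lambda>(x,y). (a - x, y)) \<or> \<phi> = (\<lambda>(x,y). (x, a - y))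
               \<or> \<phi> = (\<lambda>(x,y). (y + a, x - a)) \<or> \<phi> = (\<lambda>(x,y). (a - y, a - x))"
    using assms unfolding grid_reflections_def by blast
  then show ?thesis
  proof (elim disjE)
    assume h: "\<phi> = (\<lambda>(x,y). (a - x, y))"
    show ?thesis by (rule exI[of _ "(False,True,False)"]) (auto simp: h vadd_def frame_apply_def)
  next
    assume h: "\<phi> = (\<lambda>(x,y). (x, a - y))"
    show ?thesis by (rule exI[of _ "(False,False,True)"]) (auto simp: h vadd_def frame_apply_def)
  next
    assume h: "\<phi> = (\<lambda>(x,y). (y + a, x - a))"
    show ?thesis by (rule exI[of _ "(True,False,False)"]) (auto simp: h vadd_def frame_apply_def)
  next
    assume h: "\<phi> = (\<lambda>(x,y). (a - y, a - x))"
    show ?thesis by (rule exI[of _ "(True,True,True)"]) (auto simp: h vadd_def frame_apply_def)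
  qed
qed

lemma even_inv:
  assumes "finite S" "\<forall>x\<in>S. \<sigma> x \<in> S \<and> \<sigma> x \<noteq> x \<and> \<sigma> (\<sigma> x) = x"
  shows "even (card S)"
  using assms
proof (induction "card S" arbitrary: S rule: less_induct)
  case less
  show ?case
  proof (cases "S = {}")
    case True thus ?thesis by simp
  next
    case False
    then obtain x where x: "x \<in> S" by blast
    define S' where "S' = S - {x, \<sigma> x}"
    have c2: "card {x, \<sigma> x} = 2" using x less.prems by auto
    have c: "card S = card S' + 2" using x less.prems c2 card_Diff_subset[of "{x, \<sigma> x}" S] card_mono[of S "{x, \<sigma> x}"] unfolding S'_def
      by auto
    have "even (card S')"
      apply (rule less.hyps)
      using c less.prems x unfolding S'_def by auto metis+
    thus ?thesis using c by simp
  qed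
qed

lemma cnt_sym:
  assumes "\<forall>r<n. \<sigma> r < n \<and> P (\<sigma> r) = \<phi> (P r) \<and> \<sigma> (\<sigma> r) = r" "\<forall>x. \<phi> (\<phi> x) = x"
  shows "cnt n P (\<phi> x) = cnt n P x"
proof -
  have "bij_betw \<sigma> {r. r < n \<and> P r = x} {r. r < n \<and> P r = \<phi> x}"
    by (rule bij_betw_byWitness[where f'=\<sigma>]) (use assms in \<open>auto simp del: split_paired_All\<close>)
  then show ?thesis unfolding cnt_def by (simp add: bij_betw_same_card)
qed

lemma cnt_even:
  assumes "\<forall>r<n. \<sigma> r < n \<and> P (\<sigma> r) = \<phi> (P r) \<and> \<sigma> (\<sigma> r) = r \<and> \<sigma> r \<noteq> r" "\<phi> p = p"
  shows "even (cnt n P p)"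
  unfolding cnt_def
  by (rule even_inv[where \<sigma>=\<sigma>]) (use assms in auto)

lemma dlt_sym:
  assumes pair: "\<forall>r<n. \<sigma> r < n \<and> P (\<sigma> r) = \<phi> (P r) \<and> \<sigma> (\<sigma> r) = r"
    and phi: "\<forall>x. \<phi> (\<phi> x) = x" "\<forall>p w. \<phi> (vadd p w) = vadd (\<phi> p) (frame_apply Lf w)"
    and musym: "\<forall>v. \<mu> (\<phi> v) = \<mu> v"
    and frs: "\<forall>v. frame_apply (fr (\<sigma> r)) v = frame_apply Lf (frame_apply (fr r) v)"
    and r: "r < n"
  shows "dlt A \<mu> n fr P (\<sigma> r) = frame_apply Lf (dlt A \<mu> n fr P r)"
proof -
  have cs: "\<And>x. cnt n P (\<phi> x) = cnt n P x" using cnt_sym[OF pair phi(1)] .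
  have "view_of \<mu> n P (fr (\<sigma> r)) (P (\<sigma> r)) = view_of \<mu> n P (fr r) (P r)"
    unfolding view_of_def using pair r
    by (simp add: frs phi(2)[rule_format, symmetric] cs musym)
  then show ?thesis unfolding dlt_def by (simp add: frs)
qed

theorem lemma3:
  fixes \<mu> :: "node \<Rightarrow> nat" and n :: nat and pos0 :: "nat \<Rightarrow> node" and \<phi> :: "node \<Rightarrow> node"
  assumes parking_finite: "finite {v. \<mu> v > 0}"
    and parking_nonempty: "{v. \<mu> v > 0} \<noteq> {}"
    and n_def: "n = (\<Sum>v\<in>{v. \<mu> v > 0}. \<mu> v)"
    and distinct_init: "inj_on pos0 {..<n}"
    and refl: "\<phi> \<in> grid_reflections"
    and parking_sym: "\<forall>v. \<mu> (\<phi> v) = \<mu> v"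
    and unique_line: "\<forall>\<psi>\<in>grid_reflections. (\<forall>v. \<mu> (\<psi> v) = \<mu> v) \<longrightarrow> \<psi> = \<phi>"
    and config_sym: "\<forall>v. cnt n pos0 (\<phi> v) = cnt n pos0 v"
    and no_robot_on_axis: "\<forall>r<n. \<phi> (pos0 r) \<noteq> pos0 r"
    and parking_on_axis: "\<exists>p. \<phi> p = p \<and> \<mu> p > 0"
    and odd_cap: "\<exists>p. \<phi> p = p \<and> \<mu> p > 0 \<and> odd (\<mu> p)"
  shows "\<not> solvable \<mu> n pos0"
proof
  assume "solvable \<mu> n pos0"
  then obtain A where AA: "\<forall>fr sch. fair n sch \<longrightarrow> (\<exists>t. terminal A \<mu> n fr (exec A \<mu> n fr pos0 sch t))"
    unfolding solvable_def by blast
  obtain Lf where Lf: "\<forall>p w. \<phi> (vadd p w) = vadd (\<phi> p) (frame_apply Lf w)"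
     "\<forall>v. frame_apply Lf (frame_apply Lf v) = v" "\<forall>x. \<phi> (\<phi> x) = x"
    using refl_props[OF refl] by blast
  obtain p where p: "\<phi> p = p" "\<mu> p > 0" "odd (\<mu> p)" using odd_cap by blast
  have "\<mu> p \<le> n" unfolding n_def
    by (rule member_le_sum) (use p parking_finite in auto)
  then have npos: "0 < n" using p by simp
  have ex: "\<exists>r'. r' < n \<and> pos0 r' = \<phi> (pos0 r)" if "r < n" for r
  proof -
    have "cnt n pos0 (pos0 r) > 0" unfolding cnt_def using that
      by (subst card_gt_0_iff) auto
    then have "cnt n pos0 (\<phi> (pos0 r)) > 0" using config_sym by metis
    then have "{r'. r' < n \<and> pos0 r' = \<phi> (pos0 r)} \<noteq> {}" unfolding cnt_def by (metis card.empty less_irrefl)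
    then show ?thesis by blast
  qed
  then obtain \<sigma> where sg: "\<forall>r<n. \<sigma> r < n \<and> pos0 (\<sigma> r) = \<phi> (pos0 r)" by metis
  have sg2: "\<forall>r<n. \<sigma> (\<sigma> r) = r \<and> \<sigma> r \<noteq> r"
  proof (intro allI impI conjI)
    fix r assume r: "r < n"
    have "pos0 (\<sigma> (\<sigma> r)) = pos0 r" using sg r Lf(3) by (simp del: split_paired_All)
    then show "\<sigma> (\<sigma> r) = r" using distinct_init sg r unfolding inj_on_def by auto
    show "\<sigma> r \<noteq> r" using sg r no_robot_on_axis by metis
  qed
  define fr :: "nat \<Rightarrow> frame" where "fr r = (if r \<le> \<sigma> r then (False,False,False) else Lf)" for r
  have id0: "frame_apply (False,False,False) v = v" for v by (simp add: frame_apply_def)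
  have frs: "\<forall>v. frame_apply (fr (\<sigma> r)) v = frame_apply Lf (frame_apply (fr r) v)" if r: "r < n" for r
  proof (cases "r < \<sigma> r")
    case True
    then have "\<not> \<sigma> r \<le> \<sigma> (\<sigma> r)" using sg2 r by simp
    then show ?thesis using True by (simp add: fr_def id0)
  next
    case False
    then have "\<sigma> r < r" using sg2 r by (metis nat_neq_iff)
    then have "\<sigma> r \<le> \<sigma> (\<sigma> r)" using sg2 r by simp
    moreover have "\<not> r \<le> \<sigma> r" using \<open>\<sigma> r < r\<close> by simp
    ultimately show ?thesis by (simp add: fr_def id0 Lf(2))
  qed
  let ?R = "rnd A \<mu> n fr pos0"
  have pair: "\<forall>r<n. \<sigma> r < n \<and> ?R m (\<sigma> r) = \<phi> (?R m r) \<and> \<sigma> (\<sigma> r) = r \<and> \<sigma> r \<noteq> r" for m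
  proof (induction m)
    case 0 then show ?case using sg sg2 by simp
  next
    case (Suc m)
    show ?case
    proof (intro allI impI)
      fix r assume r: "r < n"
      have "dlt A \<mu> n fr (?R m) (\<sigma> r) = frame_apply Lf (dlt A \<mu> n fr (?R m) r)"
        by (rule dlt_sym[where P="?R m" and \<sigma>=\<sigma> and n=n, OF _ Lf(3) Lf(1) parking_sym frs[OF r] r]) (use Suc in auto)
      then show "\<sigma> r < n \<and> ?R (Suc m) (\<sigma> r) = \<phi> (?R (Suc m) r) \<and> \<sigma> (\<sigma> r) = r \<and> \<sigma> r \<noteq> r"
        using Suc r Lf(1) by (simp del: split_paired_All)
    qed
  qed
  have fair: "fair n (schd n)" unfolding fair_def schd_def
  proof (intro conjI allI impI)
    fix t show "t mod n < n" using npos by simp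
  next
    fix r t assume "r < n"
    then show "\<exists>t'\<ge>t. t' mod n = r"
      by (intro exI[of _ "r + t * n"]) (use npos in \<open>auto simp: mult.commute intro: trans_le_add2\<close>)
  qed
  obtain t where tt: "terminal A \<mu> n fr (exec A \<mu> n fr pos0 (schd n) t)" using AA fair by blast
  define m where "m = t div (2*n)"
  define k where "k = t mod (2*n)"
  have tk: "t = 2*n*m + k" unfolding m_def k_def by simp
  have kl: "k < 2*n" unfolding k_def using npos by simp
  have st: "exec A \<mu> n fr pos0 (schd n) (2*n*m) = (?R m, \<lambda>_. None)" by (rule round_start[OF npos])
  show False
  proof (cases "k \<le> n")
    case True
    have "exec A \<mu> n fr pos0 (schd n) t = (?R m, \<lambda>r. if r < k then Some (dlt A \<mu> n fr (?R m) r) else None)"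
      using look_phase[OF st True] tk by simp
    then have "cnt n (?R m) p = \<mu> p" using tt unfolding terminal_def by (simp del: split_paired_All)
    moreover have "even (cnt n (?R m) p)" by (rule cnt_even[OF pair p(1)])
    ultimately show False using p by simp
  next
    case False
    define j where "j = k - n"
    have jl: "j \<le> n" "j < n" using kl False unfolding j_def by auto
    have t2: "t = 2*n*m + n + j" using tk False unfolding j_def by simp
    have a: "exec A \<mu> n fr pos0 (schd n) (2*n*m + n) = (?R m, \<lambda>r. if r < n then Some (dlt A \<mu> n fr (?R m) r) else None)"
      using look_phase[OF st, of n] by simp
    have ex2: "exec A \<mu> n fr pos0 (schd n) t = (\<lambda>r. if r < j then ?R (Suc m) r else ?R m r,
           \<lambda>r. if j \<le> r \<and> r < n then Some (dlt A \<mu> n fr (?R m) r) else None)"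
      using move_phase[OF a jl(1)] t2 by simp
    let ?pos = "\<lambda>r. if r < j then ?R (Suc m) r else ?R m r"
    have c1: "cnt n ?pos p = \<mu> p" and z: "\<forall>r<n. j \<le> r \<longrightarrow> dlt A \<mu> n fr (?R m) r = (0,0)"
      using tt unfolding terminal_def ex2 by (auto simp del: split_paired_All)
    have "\<forall>r<n. ?pos r = ?R (Suc m) r" using z by (simp add: vadd_def)
    then have "cnt n ?pos p = cnt n (?R (Suc m)) p" unfolding cnt_def
      by (metis (no_types, lifting))
    moreover have "even (cnt n (?R (Suc m)) p)" by (rule cnt_even[OF pair p(1)])
    ultimately show False using p c1 by simp
  qed
qed

end
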